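(* Let $K=\mathbb{Z}/3$ and let $G$ be a simple graph with $s\ge1$ edges that has no Eulerian subgraph with an even (positive) number of edges. Then for every $d\ge0$, $$\dim_K C_X(d)=\sum_{i\ge0}\binom{s}{d-2i},$$ where $\binom{s}{k}=0$ for $k<0$.
   Context: Let $G$ have vertex set $\{1,\dots,n\}$ and edges $e_1,\dots,e_s$, identified with variables of $S=K[t_1,\dots,t_s]$, $K$ a finite field. Let $X\subseteq\mathbb{P}^{s-1}$ be the image of the projective torus $\{(x_1:\dots:x_n): x_i\neq0\}\subseteq\mathbb{P}^{n-1}$ under the map whose $k$-th coordinate is $x_ix_j$ when $e_k=\{i,j\}$. Order $X=\{P_1,\dots,P_m\}$. For $d\ge0$, $C_X(d)\subseteq K^m$ is the image of the space $S_d$ of degree-$d$ forms under $f\mapsto \big(f(P_1)/t_1^d(P_1),\dots,f(P_m)/t_1^d(P_m)\big)$. An Eulerian subgraph is a subgraph in which every vertex has even degree. *)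

theory Defs
  imports "HOL-Analysis.Analysis" "HOL-Library.Function_Algebras"
begin

interpretation fun_vs: vector_space "\<lambda>(c::'k::field) (f::'x \<Rightarrow> 'k) x. c * f x"
  by unfold_locales (auto simp: fun_eq_iff algebra_simps)

text \<open>Simple graph on vertex set {1..n} with edges e_1..e_s, stored as E 0, ..., E (s-1).\<close>
definition simple_graph :: "nat \<Rightarrow> nat \<Rightarrow> (nat \<Rightarrow> nat set) \<Rightarrow> bool" where
  "simple_graph n s E \<longleftrightarrow> (\<forall>k<s. E k \<subseteq> {1..n} \<and> card (E k) = 2) \<and> inj_on E {..<s}"

definition eulerian_edge_set :: "nat \<Rightarrow> nat \<Rightarrow> (nat \<Rightarrow> nat set) \<Rightarrow> nat set \<Rightarrow> bool" where
  "eulerian_edge_set n s E I \<longleftrightarrow> I \<subseteq> {..<s} \<and> (\<forall>v\<in>{1..n}. even (card {k\<in>I. v \<in> E k}))"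

definition proj_class :: "(nat \<Rightarrow> 'k::field) \<Rightarrow> (nat \<Rightarrow> 'k) set" where
  "proj_class v = {w. \<exists>c. c \<noteq> 0 \<and> w = (\<lambda>k. c * v k)}"

definition torus :: "nat \<Rightarrow> (nat \<Rightarrow> 'k::field) set" where
  "torus n = {x. \<forall>i\<in>{1..n}. x i \<noteq> 0}"

definition edge_point :: "nat \<Rightarrow> (nat \<Rightarrow> nat set) \<Rightarrow> (nat \<Rightarrow> 'k::field) \<Rightarrow> nat \<Rightarrow> 'k" where
  "edge_point s E x = (\<lambda>k. if k < s then (\<Prod>v\<in>E k. x v) else 0)"

definition proj_X :: "nat \<Rightarrow> nat \<Rightarrow> (nat \<Rightarrow> nat set) \<Rightarrow> (nat \<Rightarrow> 'k::field) set set" where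
  "proj_X n s E = proj_class ` (edge_point s E ` torus n)"

text \<open>Exponent vectors of monomials of degree d in t_1..t_s (t_{k+1} has index k).\<close>
definition monomials :: "nat \<Rightarrow> nat \<Rightarrow> (nat \<Rightarrow> nat) set" where
  "monomials s d = {a. (\<forall>k\<ge>s. a k = 0) \<and> (\<Sum>k<s. a k) = d}"

definition eval_form :: "nat \<Rightarrow> nat \<Rightarrow> ((nat \<Rightarrow> nat) \<Rightarrow> 'k::field) \<Rightarrow> (nat \<Rightarrow> 'k) \<Rightarrow> 'k" where
  "eval_form s d c v = (\<Sum>a\<in>monomials s d. c a * (\<Prod>k<s. v k ^ a k))"

text \<open>The code C_X(d): vectors indexed by the points of X (zero outside X),
  f \<mapsto> (f(P)/t_1^d(P))_{P \<in> X}, computed on a representative of P.\<close>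
definition code_CX :: "nat \<Rightarrow> nat \<Rightarrow> (nat \<Rightarrow> nat set) \<Rightarrow> nat \<Rightarrow> ((nat \<Rightarrow> 'k::field) set \<Rightarrow> 'k) set" where
  "code_CX n s E d = {(\<lambda>P. if P \<in> proj_X n s E
        then eval_form s d c (SOME v. v \<in> P) / ((SOME v. v \<in> P) 0) ^ d else 0) | c. True}"

end

theory Submission imports Defs begin

lemma sum_fun_apply': "(sum f A) x = (\<Sum>a\<in>A. f a x)"
  by (induction A rule: infinite_finite_induct) auto

lemma F3_facts:
  assumes "CARD('k::field) = 3"
  shows F3_sq: "\<And>y::'k. y \<noteq> 0 \<Longrightarrow> y * y = 1" and F3_two: "(2::'k) \<noteq> 0"
proof -
  have fin: "finite (UNIV::'k set)" using assms card.infinite by fastforce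
  obtain z::'k where z: "z \<noteq> 0" "z \<noteq> 1"
  proof -
    have "\<not> (UNIV::'k set) \<subseteq> {0,1}"
    proof
      assume "(UNIV::'k set) \<subseteq> {0,1}"
      hence "card (UNIV::'k set) \<le> card {0::'k,1}" by (rule card_mono[rotated]) simp
      also have "\<dots> \<le> 2" by (simp add: card_insert_le_m1)
      finally show False using assms by simp
    qed
    thus ?thesis using that by blast
  qed
  have U: "(UNIV::'k set) = {0,1,z}"
  proof -
    have "card {0::'k,1,z} = 3" using z by simp
    thus ?thesis using assms fin by (metis card_subset_eq subset_UNIV)
  qed
  show "\<And>y::'k. y \<noteq> 0 \<Longrightarrow> y * y = 1"
  proof -
    fix y :: 'k assume y: "y \<noteq> 0"
    show "y * y = 1"
    proof (cases "y = 1")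
      case False
      hence yz: "y = z" using U y by auto
      have "y*y \<in> {0,1,z}" using U by auto
      moreover have "y * y \<noteq> 0" using y by simp
      moreover have "y * y \<noteq> y" using y False by (metis mult_cancel_left1)
      ultimately show ?thesis using yz by auto
    qed simp
  qed
  show "(2::'k) \<noteq> 0"
  proof
    assume h: "(2::'k) = 0"
    have "z + 1 \<in> {0,1,z}" using U by auto
    moreover have "z + 1 \<noteq> 1" using z by simp
    moreover have "z + 1 \<noteq> z" by simp
    ultimately have "z + 1 = 0" by auto
    hence "z = -1" by (simp add: eq_neg_iff_add_eq_0)
    moreover have "(-1::'k) = 1" using h by (metis neg_eq_iff_add_eq_0 one_add_one)
    ultimately show False using z by simp
  qed
qed

definition rep :: "(nat \<Rightarrow> 'k) set \<Rightarrow> nat \<Rightarrow> 'k" where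
  "rep P = (SOME v. v \<in> P)"

definition gS :: "nat \<Rightarrow> nat \<Rightarrow> (nat \<Rightarrow> nat set) \<Rightarrow> nat set \<Rightarrow> (nat \<Rightarrow> 'k::field) set \<Rightarrow> 'k" where
  "gS n s E S P = (if P \<in> proj_X n s E then (\<Prod>k\<in>S. rep P k / rep P 0) else 0)"

definition Gx :: "nat \<Rightarrow> (nat \<Rightarrow> nat set) \<Rightarrow> nat set \<Rightarrow> (nat \<Rightarrow> 'k::field) \<Rightarrow> 'k" where
  "Gx s E S x = (\<Prod>k\<in>S. edge_point s E x k / edge_point s E x 0)"

definition Tor :: "nat \<Rightarrow> (nat \<Rightarrow> 'k::field) set" where
  "Tor n = PiE {1..n} (\<lambda>_. {1,-1})"

definition famF :: "nat \<Rightarrow> nat \<Rightarrow> nat set set" where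
  "famF s d = {S. S \<subseteq> {..<s} \<and> card S \<le> d \<and> even (d - card S)}"

definition oddset :: "nat \<Rightarrow> (nat \<Rightarrow> nat) \<Rightarrow> nat set" where
  "oddset s a = {k\<in>{..<s}. odd (a k)}"

lemma rep_in: "P = proj_class w \<Longrightarrow> rep P \<in> P"
  unfolding rep_def proj_class_def
  by (rule someI[of _ w]) (auto intro: exI[of _ 1])

lemma rep_ratio:
  assumes "P = proj_class (w::nat \<Rightarrow> 'k::field)" "w 0 \<noteq> 0"
  shows "rep P k / rep P 0 = w k / w 0"
proof -
  obtain c where c: "c \<noteq> 0" "rep P = (\<lambda>k. c * w k)"
    using rep_in[OF assms(1)] assms(1) unfolding proj_class_def by auto
  show ?thesis using c assms(2) by simp
qed

lemma E_fin:
  assumes "simple_graph n s E" "k < s"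
  shows "finite (E k)" "E k \<subseteq> {1..n}"
  using assms unfolding simple_graph_def by (auto intro: card_ge_0_finite)

lemma ep_nz:
  assumes "simple_graph n s E" "k < s" "x \<in> torus n"
  shows "edge_point s E x k \<noteq> (0::'k::field)"
  using E_fin[OF assms(1,2)] assms(2,3) unfolding edge_point_def torus_def
  by (auto simp: prod_zero_iff)

lemma Tor_torus: "x \<in> Tor n \<Longrightarrow> x \<in> torus n"
  unfolding Tor_def torus_def by (auto simp: PiE_iff)

lemma gS_at:
  assumes "simple_graph n s E" "0 < s" "x \<in> torus n"
  shows "gS n s E S (proj_class (edge_point s E x)) = Gx s E S x"
proof -
  have "proj_class (edge_point s E x) \<in> proj_X n s E"
    unfolding proj_X_def using assms(3) by auto
  moreover have "rep (proj_class (edge_point s E x)) k / rep (proj_class (edge_point s E x)) 0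
      = edge_point s E x k / edge_point s E x 0" for k
    by (rule rep_ratio) (use ep_nz[OF assms(1,2,3)] in auto)
  ultimately show ?thesis unfolding gS_def Gx_def by simp
qed

lemma ep_flip:
  assumes "simple_graph n s E" "k < s"
  shows "edge_point s E (x(v := - x v)) k = (if v \<in> E k then -1 else 1) * edge_point s E (x::nat \<Rightarrow> 'k::field) k"
proof -
  have fin: "finite (E k)" using E_fin[OF assms] by simp
  show ?thesis
  proof (cases "v \<in> E k")
    case True
    have "(\<Prod>w\<in>E k. (x(v := - x v)) w) = (x(v := - x v)) v * (\<Prod>w\<in>E k - {v}. (x(v := - x v)) w)"
      using prod.remove[OF fin True] by blast
    also have "(\<Prod>w\<in>E k - {v}. (x(v := - x v)) w) = (\<Prod>w\<in>E k - {v}. x w)"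
      by (rule prod.cong) auto
    also have "(\<Prod>w\<in>E k. x w) = x v * (\<Prod>w\<in>E k - {v}. x w)"
      using prod.remove[OF fin True] by blast
    ultimately show ?thesis using True assms(2) unfolding edge_point_def by simp
  next
    case False
    have "(\<Prod>w\<in>E k. (x(v := - x v)) w) = (\<Prod>w\<in>E k. x w)"
      by (rule prod.cong) (use False in auto)
    thus ?thesis using False assms(2) unfolding edge_point_def by simp
  qed
qed

lemma prod_sign:
  "finite S \<Longrightarrow> (\<Prod>k\<in>S. (if v \<in> E k then -1 else 1)) = (-1::'k::field) ^ card {k\<in>S. v \<in> E k}"
  by (simp add: prod.If_cases Int_def conj_commute)


lemma monomials_fin: "finite (monomials s d)"
proof (rule finite_subset)
  show "monomials s d \<subseteq> {a. \<forall>k. (k \<in> {..<s} \<longrightarrow> a k \<in> {..d}) \<and> (k \<notin> {..<s} \<longrightarrow> a k = 0)}"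
  proof (intro subsetI CollectI allI conjI impI)
    fix a k assume a: "a \<in> monomials s d" and k: "k \<in> {..<s}"
    have "a k \<le> (\<Sum>k<s. a k)" by (rule member_le_sum) (use k in auto)
    thus "a k \<in> {..d}" using a unfolding monomials_def by simp
  next
    fix a k assume "a \<in> monomials s d" "k \<notin> {..<s}"
    thus "a k = 0" unfolding monomials_def by auto
  qed
  show "finite {a. \<forall>k. (k \<in> {..<s} \<longrightarrow> a k \<in> {..d}) \<and> (k \<notin> {..<s} \<longrightarrow> a k = 0)}"
    by (rule finite_set_of_finite_funs) auto
qed

lemma card_sym:
  assumes "finite A" "finite B"
  shows "card A + card B = card ((A - B) \<union> (B - A)) + 2 * card (A \<inter> B)"
proof -
  have "card ((A - B) \<union> (B - A)) = card (A - B) + card (B - A)"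
    by (rule card_Un_disjoint) (use assms in auto)
  moreover have "card A = card (A \<inter> B) + card (A - B)"
    using assms card_Int_Diff by blast
  moreover have "card B = card (B \<inter> A) + card (B - A)"
    using assms card_Int_Diff by blast
  ultimately show ?thesis by (simp add: Int_commute)
qed

lemma Gx_flip:
  assumes "simple_graph n s E" "0 < s" "S \<subseteq> {..<s}"
  shows "Gx s E S (x(v := - x v)) = (-1)^card {k\<in>S. v \<in> E k} * (if v \<in> E 0 then -1 else 1) ^ card S * Gx s E S (x::nat \<Rightarrow> 'k::field)"
proof -
  have fin: "finite S" using assms(3) finite_subset by blast
  define sg where "sg k = (if v \<in> E k then -1 else (1::'k))" for k
  have sg0: "1 / sg 0 = sg 0" unfolding sg_def by simp
  have "Gx s E S (x(v := - x v)) = (\<Prod>k\<in>S. (sg k * edge_point s E x k) / (sg 0 * edge_point s E x 0))"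
  proof -
    have e: "\<And>k. k < s \<Longrightarrow> edge_point s E (x(v := - x v)) k = sg k * edge_point s E x k"
      using ep_flip[OF assms(1)] unfolding sg_def by blast
    show ?thesis unfolding Gx_def
      by (rule prod.cong) (use assms e in auto)
  qed
  also have "\<dots> = (\<Prod>k\<in>S. sg k * sg 0 * (edge_point s E x k / edge_point s E x 0))"
    by (rule prod.cong) (auto simp: sg_def)
  also have "\<dots> = (\<Prod>k\<in>S. sg k) * sg 0 ^ card S * Gx s E S x"
    unfolding Gx_def by (simp only: prod.distrib prod_constant)
  finally show ?thesis using prod_sign[OF fin, of v E] unfolding sg_def by metis
qed


lemma Tor_flip:
  assumes "x \<in> Tor n" "v \<in> {1..n}"
  shows "x(v := - x v) \<in> (Tor n :: (nat \<Rightarrow> 'k::field) set)"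
  using assms unfolding Tor_def by (auto simp: PiE_iff extensional_def)

lemma sq_sign: "(if b then -1 else (1::'k::field)) ^ (2 * m) = 1"
  by (simp add: power_mult)

lemma rep_nz:
  assumes "P = proj_class (w::nat \<Rightarrow> 'k::field)" "w k \<noteq> 0"
  shows "rep P k \<noteq> 0"
proof -
  obtain c where c: "c \<noteq> 0" "rep P = (\<lambda>k. c * w k)"
    using rep_in[OF assms(1)] assms(1) unfolding proj_class_def by auto
  show ?thesis using c assms(2) by simp
qed

lemma pow_sq1: "(y::'a::monoid_mult) * y = 1 \<Longrightarrow> y ^ m = (if odd m then y else 1)"
  by (induction m) (auto simp: mult.assoc[symmetric])

context
  fixes n s d :: nat and E :: "nat \<Rightarrow> nat set"
  assumes K3: "CARD('k::field) = 3"
    and simple: "simple_graph n s E"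
    and s_pos: "0 < s"
    and noeul: "\<not> (\<exists>I. eulerian_edge_set n s E I \<and> I \<noteq> {} \<and> even (card I))"
begin

lemma orth:
  assumes S: "S \<in> famF s d" and S': "S' \<in> famF s d" and ne: "S \<noteq> S'"
  shows "(\<Sum>x\<in>Tor n. Gx s E S x * Gx s E S' x) = (0::'k)"
proof -
  let ?D = "(S - S') \<union> (S' - S)"
  have Ss: "S \<subseteq> {..<s}" "S' \<subseteq> {..<s}" using S S' unfolding famF_def by auto
  have fin: "finite S" "finite S'" using Ss finite_subset by blast+
  have c1: "card S \<le> d" "even (d - card S)" using S unfolding famF_def by auto
  have c2: "card S' \<le> d" "even (d - card S')" using S' unfolding famF_def by auto
  have par: "even (card S + card S')"
    using c1 c2 by presburger
  have "even (card ?D)" using card_sym[OF fin] par by presburger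
  moreover have "?D \<noteq> {}" using ne by blast
  moreover have "?D \<subseteq> {..<s}" using Ss by blast
  ultimately obtain v where v: "v \<in> {1..n}" "odd (card {k\<in>?D. v \<in> E k})"
    using noeul unfolding eulerian_edge_set_def by blast
  let ?A = "{k\<in>S. v \<in> E k}" and ?B = "{k\<in>S'. v \<in> E k}"
  have "card ?A + card ?B = card ((?A - ?B) \<union> (?B - ?A)) + 2 * card (?A \<inter> ?B)"
    by (rule card_sym) (use fin in auto)
  moreover have "(?A - ?B) \<union> (?B - ?A) = {k\<in>?D. v \<in> E k}" by blast
  ultimately have oddAB: "odd (card ?A + card ?B)" using v(2) by presburger
  obtain m where m: "card S + card S' = 2 * m" using par by blast
  define h where "h x = Gx s E S x * Gx s E S' x" for x :: "nat \<Rightarrow> 'k"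
  define fl where "fl x = x(v := - x v)" for x :: "nat \<Rightarrow> 'k"
  have hfl: "h (fl x) = - h x" for x
  proof -
    define sg where "sg = (if v \<in> E 0 then -1 else (1::'k))"
    define a where "a = (-1::'k)^card ?A"
    define b where "b = (-1::'k)^card ?B"
    have g1: "Gx s E S (fl x) = a * sg ^ card S * Gx s E S x"
      unfolding fl_def a_def sg_def by (rule Gx_flip[OF simple s_pos Ss(1)])
    have g2: "Gx s E S' (fl x) = b * sg ^ card S' * Gx s E S' x"
      unfolding fl_def b_def sg_def by (rule Gx_flip[OF simple s_pos Ss(2)])
    have "h (fl x) = (a * b) * (sg ^ card S * sg ^ card S') * h x"
      unfolding h_def g1 g2 by (simp only: mult_ac)
    also have "a * b = -1" unfolding a_def b_def power_add[symmetric]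
      using oddAB by (simp add: neg_one_odd_power)
    also have "sg ^ card S * sg ^ card S' = 1" unfolding power_add[symmetric] m sg_def
      by (rule sq_sign)
    finally show ?thesis by simp
  qed
  have "sum h (Tor n) = sum (h \<circ> fl) (Tor n)"
  proof -
    have ffl: "fl (fl x) = x" for x by (simp add: fl_def)
    have flT: "x \<in> Tor n \<Longrightarrow> fl x \<in> Tor n" for x unfolding fl_def using Tor_flip v(1) by blast
    show ?thesis by (rule sum.reindex_bij_witness[of _ fl fl]) (simp_all only: ffl flT o_def)
  qed
  also have "\<dots> = - sum h (Tor n)" unfolding o_def hfl sum_negf ..
  finally have "sum h (Tor n) + sum h (Tor n) = 0" by (rule eq_neg_iff_add_eq_0[THEN iffD1])
  hence "2 * sum h (Tor n) = 0" unfolding mult_2 .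
  hence "sum h (Tor n) = 0" using F3_two[OF K3] by (simp only: mult_eq_0_iff) simp
  thus ?thesis unfolding h_def .
qed

lemma card_Tor: "of_nat (card (Tor n :: (nat \<Rightarrow> 'k) set)) \<noteq> (0::'k)"
proof -
  have "(1::'k) \<noteq> -1"
  proof
    assume "(1::'k) = -1"
    hence "(2::'k) = 0" by (metis neg_eq_iff_add_eq_0 one_add_one)
    thus False using F3_two[OF K3] by simp
  qed
  hence "card {1::'k, -1} = 2" by simp
  hence "card (Tor n :: (nat \<Rightarrow> 'k) set) = 2 ^ n" unfolding Tor_def by (simp add: card_PiE)
  thus ?thesis using F3_two[OF K3] by simp
qed

lemma Gx_sq:
  assumes "S \<in> famF s d" "x \<in> Tor n"
  shows "Gx s E S x * Gx s E S x = (1::'k)"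
proof -
  have Ss: "S \<subseteq> {..<s}" using assms unfolding famF_def by auto
  have xt: "x \<in> torus n" using Tor_torus assms(2) by blast
  have "Gx s E S x * Gx s E S x = (\<Prod>k\<in>S. (edge_point s E x k / edge_point s E x 0) * (edge_point s E x k / edge_point s E x 0))"
    unfolding Gx_def prod.distrib ..
  also have "\<dots> = (\<Prod>k\<in>S. 1)"
  proof (rule prod.cong)
    fix k assume "k \<in> S"
    hence "edge_point s E x k \<noteq> 0" "edge_point s E x 0 \<noteq> 0"
      using Ss ep_nz[OF simple _ xt] s_pos by auto
    thus "(edge_point s E x k / edge_point s E x 0) * (edge_point s E x k / edge_point s E x 0) = 1"
      using F3_sq[OF K3] by simp
  qed simp
  finally show ?thesis by simp
qed

lemma norm_sum:
  assumes "S \<in> famF s d"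
  shows "(\<Sum>x\<in>Tor n. Gx s E S x * (Gx s E S x :: 'k)) = of_nat (card (Tor n :: (nat \<Rightarrow> 'k) set))"
  using Gx_sq[OF assms] by simp

lemma gS_Tor:
  assumes "S \<in> famF s d" "x \<in> Tor n"
  shows "gS n s E S (proj_class (edge_point s E x)) = (Gx s E S x :: 'k)"
  using gS_at[OF simple s_pos Tor_torus[OF assms(2)]] .

lemma gS_inj: "inj_on (gS n s E :: nat set \<Rightarrow> (nat \<Rightarrow> 'k) set \<Rightarrow> 'k) (famF s d)"
proof (rule inj_onI, rule ccontr)
  fix S S' assume S: "S \<in> famF s d" and S': "S' \<in> famF s d"
    and eq: "(gS n s E S :: (nat \<Rightarrow> 'k) set \<Rightarrow> 'k) = gS n s E S'" and ne: "S \<noteq> S'"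
  have "\<And>x. x \<in> Tor n \<Longrightarrow> Gx s E S x = (Gx s E S' x :: 'k)"
    using gS_Tor[OF S] gS_Tor[OF S'] eq by metis
  hence "(\<Sum>x\<in>Tor n. Gx s E S x * Gx s E S' x) = (\<Sum>x\<in>Tor n. Gx s E S x * (Gx s E S x :: 'k))"
    by (intro sum.cong) auto
  thus False using orth[OF S S' ne] norm_sum[OF S] card_Tor by simp
qed


lemma gS_indep: "fun_vs.independent (gS n s E ` famF s d :: ((nat \<Rightarrow> 'k) set \<Rightarrow> 'k) set)"
  unfolding fun_vs.independent_explicit_module
proof (intro allI impI)
  fix t :: "((nat \<Rightarrow> 'k) set \<Rightarrow> 'k) set" and u f0
  assume fin: "finite t" and tB: "t \<subseteq> gS n s E ` famF s d"
    and sum0: "(\<Sum>v\<in>t. (\<lambda>x. u v * v x)) = 0" and f0: "f0 \<in> t"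
  define Sof where "Sof = inv_into (famF s d) (gS n s E :: nat set \<Rightarrow> (nat \<Rightarrow> 'k) set \<Rightarrow> 'k)"
  have Sof: "Sof f \<in> famF s d" "gS n s E (Sof f) = f" if "f \<in> t" for f
    using that tB unfolding Sof_def by (auto intro: inv_into_into f_inv_into_f)
  define N where "N = (of_nat (card (Tor n :: (nat \<Rightarrow> 'k) set)) :: 'k)"
  have pt: "(\<Sum>v\<in>t. u v * Gx s E (Sof v) x) = 0" if x: "x \<in> Tor n" for x
  proof -
    have "(\<Sum>v\<in>t. (\<lambda>x. u v * v x)) (proj_class (edge_point s E x)) = 0"
      using sum0 by simp
    hence "(\<Sum>v\<in>t. u v * v (proj_class (edge_point s E x))) = 0"
      by (simp add: sum_fun_apply')
    moreover have "v (proj_class (edge_point s E x)) = Gx s E (Sof v) x" if "v \<in> t" for v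
      using gS_Tor[OF Sof(1)[OF that] x] Sof(2)[OF that] by simp
    ultimately show ?thesis by simp
  qed
  have inner: "(\<Sum>x\<in>Tor n. Gx s E (Sof v) x * Gx s E (Sof f0) x) = (if v = f0 then N else 0)"
    if v: "v \<in> t" for v
  proof (cases "v = f0")
    case True
    then show ?thesis using norm_sum[OF Sof(1)[OF f0]] unfolding N_def by simp
  next
    case False
    hence "Sof v \<noteq> Sof f0" using Sof(2)[OF v] Sof(2)[OF f0] by metis
    then show ?thesis using orth[OF Sof(1)[OF v] Sof(1)[OF f0]] False by simp
  qed
  have "0 = (\<Sum>x\<in>Tor n. (\<Sum>v\<in>t. u v * Gx s E (Sof v) x) * Gx s E (Sof f0) x)"
    using pt by simp
  also have "\<dots> = (\<Sum>v\<in>t. u v * (\<Sum>x\<in>Tor n. Gx s E (Sof v) x * Gx s E (Sof f0) x))"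
    by (simp add: sum_distrib_right sum_distrib_left mult.assoc sum.swap[of _ "Tor n"])
  also have "\<dots> = (\<Sum>v\<in>t. if v = f0 then u v * N else 0)"
    by (rule sum.cong) (simp_all add: inner)
  also have "\<dots> = u f0 * N" using f0 fin by simp
  finally show "u f0 = 0" using card_Tor unfolding N_def by simp
qed


lemma X_rep: "P \<in> proj_X n s E \<Longrightarrow> \<exists>x\<in>torus n. P = proj_class (edge_point s E (x::nat \<Rightarrow> 'k))"
  unfolding proj_X_def by auto

lemma L1:
  assumes P: "P \<in> (proj_X n s E :: (nat \<Rightarrow> 'k) set set)" and a: "a \<in> monomials s d"
  shows "(\<Prod>k<s. rep P k ^ a k) / rep P 0 ^ d = (\<Prod>k\<in>oddset s a. rep P k / rep P 0)"
proof -
  obtain x where x: "x \<in> torus n" "P = proj_class (edge_point s E (x::nat \<Rightarrow> 'k))"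
    using X_rep[OF P] by blast
  have nz: "edge_point s E x k \<noteq> 0" if "k < s" for k using ep_nz[OF simple that x(1)] .
  have r0: "rep P 0 \<noteq> 0" using rep_nz[OF x(2) nz[OF s_pos]] .
  have rsq: "(rep P k / rep P 0) * (rep P k / rep P 0) = 1" if "k < s" for k
  proof -
    have "rep P k / rep P 0 = edge_point s E x k / edge_point s E x 0"
      by (rule rep_ratio[OF x(2) nz[OF s_pos]])
    moreover have "edge_point s E x k / edge_point s E x 0 \<noteq> 0" using nz[OF that] nz[OF s_pos] by simp
    ultimately show ?thesis using F3_sq[OF K3] by simp
  qed
  have d: "d = (\<Sum>k<s. a k)" using a unfolding monomials_def by simp
  have "rep P 0 ^ d = (\<Prod>k<s. rep P 0 ^ a k)" unfolding d by (rule power_sum)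
  hence "(\<Prod>k<s. rep P k ^ a k) / rep P 0 ^ d = (\<Prod>k<s. (rep P k / rep P 0) ^ a k)"
    by (simp add: prod_dividef power_divide)
  also have "\<dots> = (\<Prod>k<s. if odd (a k) then rep P k / rep P 0 else 1)"
    by (rule prod.cong) (simp_all add: pow_sq1[OF rsq])
  also have "\<dots> = (\<Prod>k\<in>oddset s a. rep P k / rep P 0)"
    unfolding oddset_def by (rule prod.inter_filter[symmetric]) simp
  finally show ?thesis .
qed

lemma oddset_famF:
  assumes a: "a \<in> monomials s d"
  shows "oddset s a \<in> famF s d"
proof -
  have d: "d = (\<Sum>k<s. a k)" using a unfolding monomials_def by simp
  have "card (oddset s a) = (\<Sum>k\<in>oddset s a. 1)" by simp
  also have "\<dots> \<le> (\<Sum>k\<in>oddset s a. a k)"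
    by (rule sum_mono) (auto simp: oddset_def intro: Suc_leI odd_pos)
  also have "\<dots> \<le> (\<Sum>k<s. a k)" by (rule sum_mono2) (auto simp: oddset_def)
  finally have c: "card (oddset s a) \<le> d" using d by simp
  have "even d \<longleftrightarrow> even (card (oddset s a))" unfolding d oddset_def
    by (rule even_sum_iff) simp
  hence "even (d - card (oddset s a))" using c by auto
  thus ?thesis using c unfolding famF_def oddset_def by auto
qed


definition Phi :: "((nat \<Rightarrow> nat) \<Rightarrow> 'k) \<Rightarrow> (nat \<Rightarrow> 'k) set \<Rightarrow> 'k" where
  "Phi c = (\<lambda>P. if P \<in> proj_X n s E then eval_form s d c (rep P) / (rep P 0) ^ d else 0)"

lemma code_eq: "(code_CX n s E d :: ((nat \<Rightarrow> 'k) set \<Rightarrow> 'k) set) = range Phi"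
  unfolding code_CX_def Phi_def rep_def by auto

lemma Phi_eq: "Phi c P = (\<Sum>a\<in>monomials s d. c a * gS n s E (oddset s a) P)"
proof (cases "P \<in> proj_X n s E")
  case True
  have "Phi c P = (\<Sum>a\<in>monomials s d. c a * ((\<Prod>k<s. rep P k ^ a k) / rep P 0 ^ d))"
    using True unfolding Phi_def eval_form_def by (simp add: sum_divide_distrib)
  also have "\<dots> = (\<Sum>a\<in>monomials s d. c a * gS n s E (oddset s a) P)"
    by (rule sum.cong) (simp_all add: L1[OF True] gS_def True)
  finally show ?thesis .
qed (simp add: Phi_def gS_def)

lemma Phi_sum: "Phi c = (\<Sum>a\<in>monomials s d. (\<lambda>P. c a * gS n s E (oddset s a) P))"
  by (rule ext) (simp add: Phi_eq sum_fun_apply')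

lemma code_subspace: "fun_vs.subspace (range Phi)"
  unfolding fun_vs.subspace_def
proof (intro conjI ballI allI)
  show "0 \<in> range Phi"
  proof
    show "0 = Phi (\<lambda>_. 0)" by (rule ext) (simp add: Phi_eq)
  qed simp
next
  fix f g assume "f \<in> range Phi" "g \<in> range Phi"
  then obtain c1 c2 where "f = Phi c1" "g = Phi c2" by blast
  moreover have "Phi c1 + Phi c2 = Phi (\<lambda>a. c1 a + c2 a)"
    by (rule ext) (simp add: Phi_eq distrib_right sum.distrib)
  ultimately show "f + g \<in> range Phi" by simp
next
  fix r :: 'k and f assume "f \<in> range Phi"
  then obtain c where "f = Phi c" by blast
  moreover have "(\<lambda>x. r * Phi c x) = Phi (\<lambda>a. r * c a)"
    by (rule ext) (simp add: Phi_eq sum_distrib_left mult.assoc)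
  ultimately show "(\<lambda>x. r * f x) \<in> range Phi" by simp
qed

lemma gS_in_code:
  assumes S: "S \<in> famF s d"
  shows "gS n s E S \<in> range Phi"
proof -
  have Ss: "S \<subseteq> {..<s}" and c: "card S \<le> d" and ev: "even (d - card S)"
    using S unfolding famF_def by auto
  have fin: "finite S" using Ss finite_subset by blast
  define aS where "aS k = (if k \<in> S then 1 else 0) + (if k = 0 then d - card S else 0)" for k
  have "(\<Sum>k<s. aS k) = (\<Sum>k<s. if k \<in> S then 1 else 0) + (\<Sum>k<s. if k = 0 then d - card S else 0)"
    unfolding aS_def by (rule sum.distrib)
  also have "(\<Sum>k<s. if k \<in> S then (1::nat) else 0) = card S"
    using Ss by (simp add: sum.If_cases Int_absorb1)
  also have "(\<Sum>k<s. if k = 0 then d - card S else 0) = d - card S"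
    using s_pos by simp
  finally have "(\<Sum>k<s. aS k) = d" using c by simp
  moreover have "\<forall>k\<ge>s. aS k = 0" using Ss s_pos unfolding aS_def by auto
  ultimately have aSm: "aS \<in> monomials s d" unfolding monomials_def by simp
  have oS: "oddset s aS = S"
    using Ss ev unfolding oddset_def aS_def by auto
  have "gS n s E S = Phi (\<lambda>a. if a = aS then 1 else 0)"
  proof (rule ext)
    fix P
    have "Phi (\<lambda>a. if a = aS then 1 else 0) P = (\<Sum>a\<in>monomials s d. if a = aS then gS n s E (oddset s a) P else 0)"
      unfolding Phi_eq by (rule sum.cong) auto
    also have "\<dots> = gS n s E S P" using aSm oS monomials_fin by simp
    finally show "gS n s E S P = Phi (\<lambda>a. if a = aS then 1 else 0) P" by simp
  qed
  thus ?thesis by simp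
qed

lemma code_span: "(code_CX n s E d :: ((nat \<Rightarrow> 'k) set \<Rightarrow> 'k) set) = fun_vs.span (gS n s E ` famF s d)"
proof
  show "(code_CX n s E d :: ((nat \<Rightarrow> 'k) set \<Rightarrow> 'k) set) \<subseteq> fun_vs.span (gS n s E ` famF s d)"
  proof
    fix f :: "(nat \<Rightarrow> 'k) set \<Rightarrow> 'k" assume "f \<in> code_CX n s E d"
    then obtain c where f: "f = Phi c" using code_eq by auto
    show "f \<in> fun_vs.span (gS n s E ` famF s d)"
      unfolding f Phi_sum
    proof (rule fun_vs.span_sum)
      fix a assume "a \<in> monomials s d"
      hence "gS n s E (oddset s a) \<in> fun_vs.span (gS n s E ` famF s d)"
        using oddset_famF by (intro fun_vs.span_base) auto
      thus "(\<lambda>P. c a * gS n s E (oddset s a) P) \<in> fun_vs.span (gS n s E ` famF s d)"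
        by (rule fun_vs.span_scale)
    qed
  qed
  show "fun_vs.span (gS n s E ` famF s d) \<subseteq> (code_CX n s E d :: ((nat \<Rightarrow> 'k) set \<Rightarrow> 'k) set)"
    unfolding code_eq by (rule fun_vs.span_minimal) (use gS_in_code code_subspace in auto)
qed

end

lemma card_famF: "card (famF s d) = (\<Sum>i\<le>d div 2. s choose (d - 2 * i))"
proof -
  define A where "A i = {S. S \<subseteq> {..<s} \<and> card S = d - 2 * i}" for i
  have eq: "famF s d = (\<Union>i\<in>{..d div 2}. A i)"
  proof (intro equalityI subsetI)
    fix S assume "S \<in> famF s d"
    hence S: "S \<subseteq> {..<s}" "card S \<le> d" "even (d - card S)" unfolding famF_def by auto
    then obtain i where i: "d - card S = 2 * i" by blast
    hence "i \<le> d div 2" "card S = d - 2 * i" using S(2) by auto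
    thus "S \<in> (\<Union>i\<in>{..d div 2}. A i)" using S(1) unfolding A_def by auto
  next
    fix S assume "S \<in> (\<Union>i\<in>{..d div 2}. A i)"
    then obtain i where "i \<le> d div 2" "S \<subseteq> {..<s}" "card S = d - 2 * i" unfolding A_def by auto
    moreover hence "d - card S = 2 * i" by auto
    ultimately show "S \<in> famF s d" unfolding famF_def by auto
  qed
  have "card (\<Union>i\<in>{..d div 2}. A i) = (\<Sum>i\<le>d div 2. card (A i))"
  proof (rule card_UN_disjoint)
    show "\<forall>i\<in>{..d div 2}. finite (A i)" unfolding A_def
      by (auto intro: finite_subset[of _ "Pow {..<s}"])
    show "\<forall>i\<in>{..d div 2}. \<forall>j\<in>{..d div 2}. i \<noteq> j \<longrightarrow> A i \<inter> A j = {}"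
      unfolding A_def by auto
  qed simp
  also have "\<dots> = (\<Sum>i\<le>d div 2. s choose (d - 2 * i))"
    unfolding A_def by (rule sum.cong) (simp_all add: n_subsets)
  finally show ?thesis using eq by simp
qed

theorem mainTheorem4:
  fixes n s :: nat and E :: "nat \<Rightarrow> nat set" and d :: nat
  assumes K3: "CARD('k::field) = 3"
    and simple: "simple_graph n s E"
    and s_pos: "s \<ge> 1"
    and no_even_eulerian: "\<not> (\<exists>I. eulerian_edge_set n s E I \<and> I \<noteq> {} \<and> even (card I))"
  shows "fun_vs.dim (code_CX n s E d :: ((nat \<Rightarrow> 'k) set \<Rightarrow> 'k) set)
           = (\<Sum>i\<le>d div 2. s choose (d - 2 * i))"
proof -
  have sp: "0 < s" using s_pos by simp
  have "fun_vs.dim (code_CX n s E d :: ((nat \<Rightarrow> 'k) set \<Rightarrow> 'k) set)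
      = fun_vs.dim (fun_vs.span (gS n s E ` famF s d :: ((nat \<Rightarrow> 'k) set \<Rightarrow> 'k) set))"
    using code_span[OF K3 simple sp no_even_eulerian] by simp
  also have "\<dots> = card (gS n s E ` famF s d :: ((nat \<Rightarrow> 'k) set \<Rightarrow> 'k) set)"
    by (rule fun_vs.dim_span_eq_card_independent) (rule gS_indep[OF K3 simple sp no_even_eulerian])
  also have "\<dots> = card (famF s d)"
    by (rule card_image) (rule gS_inj[OF K3 simple sp no_even_eulerian])
  finally show ?thesis using card_famF by simp
qed

end
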